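(* Let $T\colon X\to X$ be a piecewise invertible map (with respect to a regular open partition $\mathcal U$) on a compact Hausdorff space $X$. Then the map $T'\colon X'\to X'$ is a local homeomorphism.
   Context: Let $X$ be compact Hausdorff. A set $U$ is regular open if $U=\mathrm{int}(\overline U)$. A regular open partition of $X$ is a finite family of nonempty, pairwise disjoint regular open sets whose closures cover $X$. For regular open partitions $\mathcal V,\mathcal W$, $\mathcal V\vee\mathcal W=\{V\cap W\ne\emptyset: V\in\mathcal V,W\in\mathcal W\}$; $\mathcal V\preceq\mathcal W$ means each element of $\mathcal W$ lies in a (necessarily unique) element of $\mathcal V$. A continuous $T\colon X\to X$ is piecewise invertible w.r.t. a regular open partition $\mathcal U=\{U_i\}_{i\in I}$, $C_i:=\overline{U_i}$, if each restriction $T_i\colon C_i\to T(C_i)$ is a homeomorphism and $T(U_i)=\mathrm{int}(T(C_i))$. For a regular open partition $\mathcal V=\{V_j\}$, put $\mathcal T_i=\{T(U_i\cap V_j):U_i\cap V_j\neq\emptyset\}\cup\{X\setminus T(C_i)\}$ (omitting empty sets), $T(\mathcal V)=\bigvee_i\mathcal T_i$, and $T^{-1}(\mathcal V)=\{T_i^{-1}(O): i\in I,\ O\in\mathcal V\vee T(\mathcal U),\ O\subseteq T(U_i)\}$; these are regular open partitions, and $T^\beta,T^{-\alpha}$ denote iterates of these operations. Set $\mathcal U_{m,n}=\bigvee_{0\le\alpha\le m,0\le\beta\le n}T^{-\alpha}(T^\beta(\mathcal U))$; for $(m',n')\ge(m,n)$ componentwise, $\mathcal U_{m,n}\preceq\mathcal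 U_{m',n'}$. Let $\bar X=\varprojlim\mathcal U_{m,n}$ (inverse limit of finite discrete sets), whose elements are families $\mathbf U=(U_{m,n})$, $U_{m,n}\in\mathcal U_{m,n}$, compatible under inclusion. Let $X'=\{(x,(U_{m,n}))\in X\times\bar X: x\in\overline{U_{m,n}}\ \forall m,n\}$ with the subspace topology, $\bar T\colon\bar X\to\bar X$, $\bar T((U_{m,n}))=(V_{m,n})$ where $V_{m,n}$ is the unique element of $\mathcal U_{m,n}$ containing $T(U_{m+1,n})$, and $T'(x,\mathbf U)=(Tx,\bar T\mathbf U)$. *)

theory Defs
  imports "HOL-Analysis.Analysis"
begin

text \<open>The compact Hausdorff space X is the universe of a type 'a of class t2_space,
  assumed compact in the theorem.\<close>

definition regular_open :: "'a::topological_space set \<Rightarrow> bool" where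
  "regular_open U \<longleftrightarrow> U = interior (closure U)"

definition ro_partition :: "'a::topological_space set set \<Rightarrow> bool" where
  "ro_partition P \<longleftrightarrow> finite P \<and> (\<forall>V\<in>P. V \<noteq> {} \<and> regular_open V)
     \<and> pairwise disjnt P \<and> (\<Union>V\<in>P. closure V) = UNIV"

definition pjoin :: "'a set set \<Rightarrow> 'a set set \<Rightarrow> 'a set set" where
  "pjoin P Q = {V \<inter> W | V W. V \<in> P \<and> W \<in> Q \<and> V \<inter> W \<noteq> {}}"

text \<open>Join of a finite indexed family of partitions (iterated binary join);
  for the empty index set this is the trivial partition.\<close>
definition pJoin :: "'i set \<Rightarrow> ('i \<Rightarrow> 'a set set) \<Rightarrow> 'a set set" where
  "pJoin I P = {S. S \<noteq> {} \<and> (\<exists>f. (\<forall>i\<in>I. f i \<in> P i) \<and> S = (\<Inter>i\<in>I. f i))}"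

definition prefines :: "'a set set \<Rightarrow> 'a set set \<Rightarrow> bool" where
  "prefines V W \<longleftrightarrow> (\<forall>B\<in>W. \<exists>A\<in>V. B \<subseteq> A)"

definition piecewise_invertible :: "('a::topological_space \<Rightarrow> 'a) \<Rightarrow> 'a set set \<Rightarrow> bool" where
  "piecewise_invertible T \<U> \<longleftrightarrow> ro_partition \<U> \<and> continuous_on UNIV T \<and>
     (\<forall>U\<in>\<U>. (\<exists>g. homeomorphism (closure U) (T ` closure U) T g)
             \<and> T ` U = interior (T ` closure U))"

definition Tfam :: "('a::topological_space \<Rightarrow> 'a) \<Rightarrow> 'a set \<Rightarrow> 'a set set \<Rightarrow> 'a set set" where
  "Tfam T U \<V> = ({T ` (U \<inter> V) | V. V \<in> \<V> \<and> U \<inter> V \<noteq> {}} \<union> {UNIV - T ` closure U}) - {{}}"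

definition Tfwd :: "('a::topological_space \<Rightarrow> 'a) \<Rightarrow> 'a set set \<Rightarrow> 'a set set \<Rightarrow> 'a set set" where
  "Tfwd T \<U> \<V> = pJoin \<U> (\<lambda>U. Tfam T U \<V>)"

definition Tinv :: "('a::topological_space \<Rightarrow> 'a) \<Rightarrow> 'a set set \<Rightarrow> 'a set set \<Rightarrow> 'a set set" where
  "Tinv T \<U> \<V> = {{x \<in> closure U. T x \<in> Ob} | U Ob.
       U \<in> \<U> \<and> Ob \<in> pjoin \<V> (Tfwd T \<U> \<U>) \<and> Ob \<subseteq> T ` U}"

definition Umn :: "('a::topological_space \<Rightarrow> 'a) \<Rightarrow> 'a set set \<Rightarrow> nat \<Rightarrow> nat \<Rightarrow> 'a set set" where
  "Umn T \<U> m n = pJoin {(\<alpha>, \<beta>). \<alpha> \<le> m \<and> \<beta> \<le> n}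
      (\<lambda>(\<alpha>, \<beta>). (Tinv T \<U> ^^ \<alpha>) ((Tfwd T \<U> ^^ \<beta>) \<U>))"

text \<open>The inverse limit \<bar>X, as a set of compatible families.\<close>
definition Xbar :: "('a::topological_space \<Rightarrow> 'a) \<Rightarrow> 'a set set \<Rightarrow> (nat \<times> nat \<Rightarrow> 'a set) set" where
  "Xbar T \<U> = {\<UU>. (\<forall>m n. \<UU> (m, n) \<in> Umn T \<U> m n) \<and>
      (\<forall>m n m' n'. m \<le> m' \<and> n \<le> n' \<longrightarrow> \<UU> (m', n') \<subseteq> \<UU> (m, n))}"

definition Xbar_top :: "('a::topological_space \<Rightarrow> 'a) \<Rightarrow> 'a set set \<Rightarrow> (nat \<times> nat \<Rightarrow> 'a set) topology" where
  "Xbar_top T \<U> = subtopology (product_topology (\<lambda>_. discrete_topology UNIV) UNIV) (Xbar T \<U>)"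

definition Xprime :: "('a::topological_space \<Rightarrow> 'a) \<Rightarrow> 'a set set \<Rightarrow> ('a \<times> (nat \<times> nat \<Rightarrow> 'a set)) set" where
  "Xprime T \<U> = {(x, \<UU>). \<UU> \<in> Xbar T \<U> \<and> (\<forall>m n. x \<in> closure (\<UU> (m, n)))}"

definition Xprime_top :: "('a::topological_space \<Rightarrow> 'a) \<Rightarrow> 'a set set \<Rightarrow> ('a \<times> (nat \<times> nat \<Rightarrow> 'a set)) topology" where
  "Xprime_top T \<U> = subtopology (prod_topology euclidean (Xbar_top T \<U>)) (Xprime T \<U>)"

definition Tbar :: "('a::topological_space \<Rightarrow> 'a) \<Rightarrow> 'a set set \<Rightarrow> (nat \<times> nat \<Rightarrow> 'a set) \<Rightarrow> (nat \<times> nat \<Rightarrow> 'a set)" where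
  "Tbar T \<U> \<UU> = (\<lambda>(m, n). THE V. V \<in> Umn T \<U> m n \<and> T ` \<UU> (Suc m, n) \<subseteq> V)"

definition Tprime :: "('a::topological_space \<Rightarrow> 'a) \<Rightarrow> 'a set set \<Rightarrow> 'a \<times> (nat \<times> nat \<Rightarrow> 'a set) \<Rightarrow> 'a \<times> (nat \<times> nat \<Rightarrow> 'a set)" where
  "Tprime T \<U> p = (T (fst p), Tbar T \<U> (snd p))"

definition local_homeomorphism :: "'a topology \<Rightarrow> 'b topology \<Rightarrow> ('a \<Rightarrow> 'b) \<Rightarrow> bool" where
  "local_homeomorphism X Y f \<longleftrightarrow> f ` topspace X \<subseteq> topspace Y \<and>
     (\<forall>x\<in>topspace X. \<exists>W. openin X W \<and> x \<in> W \<and> openin Y (f ` W) \<and>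
        homeomorphic_map (subtopology X W) (subtopology Y (f ` W)) f)"

end

theory Submission
  imports Defs
begin


definition dfam :: "'b set set \<Rightarrow> bool" where
  "dfam F \<longleftrightarrow> {} \<notin> F \<and> pairwise disjnt F"

lemma pJoin_dfam:
  assumes "\<forall>i\<in>I. dfam (P i)" shows "dfam (pJoin I P)"
  unfolding dfam_def pairwise_def
proof (intro conjI ballI impI)
  show "{} \<notin> pJoin I P" by (simp add: pJoin_def)
next
  fix A B assume A: "A \<in> pJoin I P" and B: "B \<in> pJoin I P" and ne: "A \<noteq> B"
  from A obtain f where f: "\<forall>i\<in>I. f i \<in> P i" "A = (\<Inter>i\<in>I. f i)" by (auto simp: pJoin_def)
  from B obtain g where g: "\<forall>i\<in>I. g i \<in> P i" "B = (\<Inter>i\<in>I. g i)" by (auto simp: pJoin_def)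
  have "\<exists>i\<in>I. f i \<noteq> g i"
  proof (rule ccontr)
    assume "\<not> ?thesis" then have "A = B" using f g by (auto)
    with ne show False by simp
  qed
  then obtain i where i: "i \<in> I" "f i \<noteq> g i" by blast
  then have "disjnt (f i) (g i)" using assms f g unfolding dfam_def pairwise_def by blast
  moreover have "A \<subseteq> f i" "B \<subseteq> g i" using f g i by auto
  ultimately show "disjnt A B" by (meson disjnt_subset1 disjnt_subset2)
qed

lemma pjoin_dfam:
  assumes "dfam P" "dfam Q" shows "dfam (pjoin P Q)"
  unfolding dfam_def pairwise_def
proof (intro conjI ballI impI)
  show "{} \<notin> pjoin P Q" by (auto simp: pjoin_def)
next
  fix A B assume A: "A \<in> pjoin P Q" and B: "B \<in> pjoin P Q" and ne: "A \<noteq> B"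
  from A obtain V W where v: "V \<in> P" "W \<in> Q" "A = V \<inter> W" by (auto simp: pjoin_def)
  from B obtain V' W' where v': "V' \<in> P" "W' \<in> Q" "B = V' \<inter> W'" by (auto simp: pjoin_def)
  have "V \<noteq> V' \<or> W \<noteq> W'" using ne v v' by auto
  moreover have "V \<noteq> V' \<Longrightarrow> disjnt V V'" using assms(1) v v' unfolding dfam_def pairwise_def by blast
  moreover have "W \<noteq> W' \<Longrightarrow> disjnt W W'" using assms(2) v v' unfolding dfam_def pairwise_def by blast
  ultimately have "disjnt V V' \<or> disjnt W W'" by blast
  then show "disjnt A B" unfolding v(3) v'(3) disjnt_def by blast
qed

lemma pJoin_cover:
  assumes "S \<noteq> {}" "\<forall>i\<in>I. \<exists>A\<in>P i. S \<subseteq> A"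
  shows "\<exists>B\<in>pJoin I P. S \<subseteq> B"
proof -
  from assms(2) obtain f where f: "\<forall>i\<in>I. f i \<in> P i \<and> S \<subseteq> f i" by metis
  have "S \<subseteq> (\<Inter>i\<in>I. f i)" using f by auto
  moreover then have "(\<Inter>i\<in>I. f i) \<in> pJoin I P" using f assms(1) unfolding pJoin_def by blast
  ultimately show ?thesis by blast
qed

lemma pJoin_elem:
  assumes "B \<in> pJoin I P" "i \<in> I" shows "\<exists>A\<in>P i. B \<subseteq> A"
  using assms unfolding pJoin_def by blast

lemma pJoin_ne: "B \<in> pJoin I P \<Longrightarrow> B \<noteq> {}"
  unfolding pJoin_def by blast

lemma pJoin_refine:
  assumes "B \<in> pJoin I' P" "I \<subseteq> I'" shows "\<exists>A\<in>pJoin I P. B \<subseteq> A"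
  using pJoin_cover[of B I P] pJoin_elem[OF assms(1)] pJoin_ne[OF assms(1)] assms(2) by blast

lemma dfam_uniq:
  assumes "dfam F" "A \<in> F" "B \<in> F" "S \<subseteq> A" "S \<subseteq> B" "S \<noteq> {}" shows "A = B"
  using assms unfolding dfam_def pairwise_def disjnt_def by blast

locale PI =
  fixes T :: "'a::t2_space \<Rightarrow> 'a" and \<U> :: "'a set set"
  assumes cpt: "compact (UNIV :: 'a set)"
    and pi: "piecewise_invertible T \<U>"
begin

lemma ro: "ro_partition \<U>" using pi by (simp add: piecewise_invertible_def)
lemma contT: "continuous_on UNIV T" using pi by (simp add: piecewise_invertible_def)

lemma homU: "U \<in> \<U> \<Longrightarrow> \<exists>g. homeomorphism (closure U) (T ` closure U) T g"
  using pi by (simp add: piecewise_invertible_def)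

lemma injU: "U \<in> \<U> \<Longrightarrow> inj_on T (closure U)"
  using homU unfolding homeomorphism_def by (metis inj_on_inverseI)

lemma dfamU: "dfam \<U>"
  using ro unfolding ro_partition_def dfam_def by blast

lemma U_disj: "U \<in> \<U> \<Longrightarrow> U' \<in> \<U> \<Longrightarrow> U \<inter> U' \<noteq> {} \<Longrightarrow> U = U'"
  using dfamU unfolding dfam_def pairwise_def disjnt_def by blast

lemma closedTU: "U \<in> \<U> \<Longrightarrow> closed (T ` closure U)"
proof -
  assume "U \<in> \<U>"
  have "compact (closure U)" using compact_Int_closed[OF cpt closed_closure[of U]] by simp
  then have "compact (T ` closure U)" using contT by (meson compact_continuous_image continuous_on_subset subset_UNIV)
  then show ?thesis by (simp add: compact_imp_closed)
qed

lemma preimg_sub: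
  assumes "U \<in> \<U>" "Ob \<subseteq> T ` U" shows "{x \<in> closure U. T x \<in> Ob} \<subseteq> U"
proof
  fix x assume x: "x \<in> {x \<in> closure U. T x \<in> Ob}"
  then obtain u where u: "u \<in> U" "T x = T u" using assms by blast
  have "u \<in> closure U" using u(1) closure_subset by blast
  moreover have "x \<in> closure U" using x by simp
  ultimately have "x = u" using injU[OF assms(1)] u(2) unfolding inj_on_def by blast
  then show "x \<in> U" using u by simp
qed

lemma preimg_ne:
  assumes "U \<in> \<U>" "Ob \<subseteq> T ` U" "Ob \<noteq> {}" shows "{x \<in> closure U. T x \<in> Ob} \<noteq> {}"
proof -
  obtain z where "z \<in> Ob" using assms(3) by blast
  then obtain u where "u \<in> U" "T u = z" using assms(2) by blast
  then have "u \<in> {x \<in> closure U. T x \<in> Ob}" using closure_subset \<open>z \<in> Ob\<close> by blast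
  then show ?thesis by blast
qed

lemma img_preimg:
  assumes "U \<in> \<U>" "Ob \<subseteq> T ` U" shows "T ` {x \<in> closure U. T x \<in> Ob} = Ob"
proof
  show "T ` {x \<in> closure U. T x \<in> Ob} \<subseteq> Ob" by blast
  show "Ob \<subseteq> T ` {x \<in> closure U. T x \<in> Ob}"
  proof
    fix z assume "z \<in> Ob"
    then obtain u where "u \<in> U" "T u = z" using assms(2) by blast
    then show "z \<in> T ` {x \<in> closure U. T x \<in> Ob}" using closure_subset \<open>z \<in> Ob\<close> by blast
  qed
qed

lemma Tfam_dfam:
  assumes U: "U \<in> \<U>" and V: "dfam V" shows "dfam (Tfam T U V)"
  unfolding dfam_def pairwise_def
proof (intro conjI ballI impI)
  show "{} \<notin> Tfam T U V" by (simp add: Tfam_def)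
next
  fix A B assume A: "A \<in> Tfam T U V" and B: "B \<in> Tfam T U V" and ne: "A \<noteq> B"
  have inj: "inj_on T (closure U)" using injU[OF U] .
  have key: "disjnt (T ` (U \<inter> V1)) (T ` (U \<inter> V2))" if "V1 \<in> V" "V2 \<in> V" "T ` (U \<inter> V1) \<noteq> T ` (U \<inter> V2)" for V1 V2
  proof -
    have "V1 \<noteq> V2" using that by auto
    then have "disjnt V1 V2" using V that unfolding dfam_def pairwise_def by blast
    then have "T ` (U \<inter> V1) \<inter> T ` (U \<inter> V2) = T ` ((U \<inter> V1) \<inter> (U \<inter> V2))"
      using inj closure_subset by (intro inj_on_image_Int[symmetric]) auto
    then show ?thesis using \<open>disjnt V1 V2\<close> by (auto simp: disjnt_def)
  qed
  have key2: "disjnt (T ` (U \<inter> V1)) (UNIV - T ` closure U)" for V1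
    using closure_subset by (auto simp: disjnt_def)
  have cs: "(\<exists>V1\<in>V. X = T ` (U \<inter> V1)) \<or> X = UNIV - T ` closure U" if "X \<in> Tfam T U V" for X
    using that by (auto simp: Tfam_def)
  show "disjnt A B"
  proof (cases "A = UNIV - T ` closure U")
    case True
    then obtain V2 where "V2 \<in> V" "B = T ` (U \<inter> V2)" using cs[OF B] ne by blast
    then show ?thesis using True key2 disjnt_sym by metis
  next
    case False
    then obtain V1 where v1: "V1 \<in> V" "A = T ` (U \<inter> V1)" using cs[OF A] by blast
    show ?thesis
    proof (cases "B = UNIV - T ` closure U")
      case True then show ?thesis using v1 key2 by simp
    next
      case False
      then obtain V2 where "V2 \<in> V" "B = T ` (U \<inter> V2)" using cs[OF B] by blast
      then show ?thesis using v1 key ne by blast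
    qed
  qed
qed

lemma Tfwd_dfam: "dfam V \<Longrightarrow> dfam (Tfwd T \<U> V)"
  unfolding Tfwd_def by (intro pJoin_dfam) (auto intro: Tfam_dfam)

lemma TU_dfam: "dfam (Tfwd T \<U> \<U>)" using Tfwd_dfam dfamU .

lemma Tinv_dfam:
  assumes V: "dfam V" shows "dfam (Tinv T \<U> V)"
  unfolding dfam_def pairwise_def
proof (intro conjI ballI impI)
  show "{} \<notin> Tinv T \<U> V"
  proof
    assume "{} \<in> Tinv T \<U> V"
    then obtain U Ob where "U \<in> \<U>" "Ob \<in> pjoin V (Tfwd T \<U> \<U>)" "Ob \<subseteq> T ` U"
       "{} = {x \<in> closure U. T x \<in> Ob}" unfolding Tinv_def by blast
    moreover have "Ob \<noteq> {}" using calculation(2) by (auto simp: pjoin_def)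
    ultimately show False using preimg_ne by blast
  qed
next
  fix A B assume A: "A \<in> Tinv T \<U> V" and B: "B \<in> Tinv T \<U> V" and ne: "A \<noteq> B"
  from A obtain U Ob where a: "U \<in> \<U>" "Ob \<in> pjoin V (Tfwd T \<U> \<U>)" "Ob \<subseteq> T ` U"
       "A = {x \<in> closure U. T x \<in> Ob}" unfolding Tinv_def by blast
  from B obtain U' Ob' where b: "U' \<in> \<U>" "Ob' \<in> pjoin V (Tfwd T \<U> \<U>)" "Ob' \<subseteq> T ` U'"
       "B = {x \<in> closure U'. T x \<in> Ob'}" unfolding Tinv_def by blast
  show "disjnt A B" unfolding disjnt_def
  proof (rule ccontr)
    assume "A \<inter> B \<noteq> {}"
    then obtain x where x: "x \<in> A" "x \<in> B" by blast
    have "x \<in> U" "x \<in> U'" using preimg_sub a b x by blast+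
    then have "U = U'" using U_disj a b by blast
    moreover have "Ob = Ob'"
      using dfam_uniq[OF pjoin_dfam[OF V TU_dfam] a(2) b(2), of "{T x}"] x a b by auto
    ultimately show False using a b ne by simp
  qed
qed

abbreviation Q :: "nat \<Rightarrow> nat \<Rightarrow> 'a set set" where
  "Q a b \<equiv> (Tinv T \<U> ^^ a) ((Tfwd T \<U> ^^ b) \<U>)"

lemma Q_dfam: "dfam (Q a b)"
proof -
  have "dfam ((Tfwd T \<U> ^^ b) \<U>)" by (induct b) (auto simp: dfamU Tfwd_dfam)
  then show ?thesis by (induct a) (auto simp: Tinv_dfam)
qed

lemma Umn_eq: "Umn T \<U> m n = pJoin {(\<alpha>, \<beta>). \<alpha> \<le> m \<and> \<beta> \<le> n} (\<lambda>(\<alpha>, \<beta>). Q \<alpha> \<beta>)"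
  unfolding Umn_def ..

lemma Umn_dfam: "dfam (Umn T \<U> m n)"
  unfolding Umn_eq by (intro pJoin_dfam) (auto simp: Q_dfam)

lemma Umn_uniq: "A \<in> Umn T \<U> m n \<Longrightarrow> B \<in> Umn T \<U> m n \<Longrightarrow> S \<subseteq> A \<Longrightarrow> S \<subseteq> B \<Longrightarrow> S \<noteq> {} \<Longrightarrow> A = B"
  using dfam_uniq[OF Umn_dfam] by blast

lemma Umn_ne: "A \<in> Umn T \<U> m n \<Longrightarrow> A \<noteq> {}"
  unfolding Umn_eq by (rule pJoin_ne)

lemma Umn_mono: "m \<le> m' \<Longrightarrow> n \<le> n' \<Longrightarrow> B \<in> Umn T \<U> m' n' \<Longrightarrow> \<exists>A\<in>Umn T \<U> m n. B \<subseteq> A"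
  unfolding Umn_eq by (erule pJoin_refine) auto

lemma Umn_elem:
  assumes "B \<in> Umn T \<U> m n" "a \<le> m" "b \<le> n" shows "\<exists>A\<in>Q a b. B \<subseteq> A"
proof -
  have "(a,b) \<in> {(\<alpha>, \<beta>). \<alpha> \<le> m \<and> \<beta> \<le> n}" using assms by simp
  from pJoin_elem[OF assms(1)[unfolded Umn_eq] this] show ?thesis by simp
qed

lemma Umn_cover:
  assumes "S \<noteq> {}" "\<And>a b. a \<le> m \<Longrightarrow> b \<le> n \<Longrightarrow> \<exists>A\<in>Q a b. S \<subseteq> A"
  shows "\<exists>B\<in>Umn T \<U> m n. S \<subseteq> B"
  unfolding Umn_eq by (rule pJoin_cover[OF assms(1)]) (use assms(2) in auto)

end

context PI begin

lemma Q_Suc: "Q (Suc a) b = Tinv T \<U> (Q a b)" by simp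
lemma Q_0Suc: "Q 0 (Suc b) = Tfwd T \<U> (Q 0 b)" by simp
lemma Q_01: "Q 0 1 = Tfwd T \<U> \<U>" by simp
lemma Q_00: "Q 0 0 = \<U>" by simp

lemma Xbar_mem: "VV \<in> Xbar T \<U> \<Longrightarrow> VV (m,n) \<in> Umn T \<U> m n"
  unfolding Xbar_def by blast
lemma Xbar_mono: "VV \<in> Xbar T \<U> \<Longrightarrow> m \<le> m' \<Longrightarrow> n \<le> n' \<Longrightarrow> VV (m',n') \<subseteq> VV (m,n)"
  unfolding Xbar_def by blast
lemma Xbar_ne: "VV \<in> Xbar T \<U> \<Longrightarrow> VV (m,n) \<noteq> {}"
  using Xbar_mem Umn_ne by blast

lemma Tinv_elem:
  assumes "A \<in> Tinv T \<U> P"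
  obtains U Ob where "U \<in> \<U>" "Ob \<in> pjoin P (Tfwd T \<U> \<U>)" "Ob \<subseteq> T ` U" "A = {x \<in> closure U. T x \<in> Ob}"
  using assms unfolding Tinv_def by blast

lemma Tinv_intro:
  assumes "U \<in> \<U>" "Ob \<in> pjoin P (Tfwd T \<U> \<U>)" "Ob \<subseteq> T ` U"
  shows "{x \<in> closure U. T x \<in> Ob} \<in> Tinv T \<U> P"
  using assms unfolding Tinv_def by blast

lemma Tbar_ex:
  assumes VV: "VV \<in> Xbar T \<U>" shows "\<exists>E\<in>Umn T \<U> k n. T ` VV (Suc k, n) \<subseteq> E"
proof (rule Umn_cover)
  show "T ` VV (Suc k, n) \<noteq> {}" using Xbar_ne[OF VV] by blast
next
  fix a b assume ab: "a \<le> k" "b \<le> n"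
  obtain A where A: "A \<in> Q (Suc a) b" "VV (Suc k, n) \<subseteq> A"
    using Umn_elem[OF Xbar_mem[OF VV, of "Suc k" n], of "Suc a" b] ab by auto
  from A(1) have "A \<in> Tinv T \<U> (Q a b)" by simp
  then obtain U Ob where u: "U \<in> \<U>" "Ob \<in> pjoin (Q a b) (Tfwd T \<U> \<U>)" "Ob \<subseteq> T ` U"
    "A = {x \<in> closure U. T x \<in> Ob}" by (rule Tinv_elem)
  from u(2) obtain G H where g: "G \<in> Q a b" "Ob = G \<inter> H" unfolding pjoin_def by blast
  have "T ` VV (Suc k, n) \<subseteq> G" using A(2) u(4) g(2) by blast
  then show "\<exists>A\<in>Q a b. T ` VV (Suc k, n) \<subseteq> A" using g(1) by blast
qed

lemma Tbar_char:
  assumes VV: "VV \<in> Xbar T \<U>" and E: "E \<in> Umn T \<U> k n" "T ` VV (Suc k, n) \<subseteq> E"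
  shows "Tbar T \<U> VV (k, n) = E"
proof -
  have ne: "T ` VV (Suc k, n) \<noteq> {}" using Xbar_ne[OF VV] by blast
  show ?thesis unfolding Tbar_def
    by (simp, rule the_equality) (use E ne Umn_uniq in blast)+
qed

lemma Tbar_mem:
  assumes VV: "VV \<in> Xbar T \<U>"
  shows "Tbar T \<U> VV (k, n) \<in> Umn T \<U> k n \<and> T ` VV (Suc k, n) \<subseteq> Tbar T \<U> VV (k, n)"
  using Tbar_ex[OF VV, of k n] Tbar_char[OF VV] by metis

lemma Tbar_Xbar:
  assumes VV: "VV \<in> Xbar T \<U>" shows "Tbar T \<U> VV \<in> Xbar T \<U>"
  unfolding Xbar_def
proof (intro CollectI conjI allI impI)
  fix m n :: nat show "Tbar T \<U> VV (m, n) \<in> Umn T \<U> m n" using Tbar_mem[OF VV] by blast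
next
  fix m n m' n' :: nat assume le: "m \<le> m' \<and> n \<le> n'"
  obtain E where E: "E \<in> Umn T \<U> m n" "Tbar T \<U> VV (m', n') \<subseteq> E"
    using Umn_mono[of m m' n n'] le Tbar_mem[OF VV, of m' n'] by blast
  have s1: "T ` VV (Suc m', n') \<subseteq> Tbar T \<U> VV (m', n')" using Tbar_mem[OF VV] by blast
  have s2: "T ` VV (Suc m', n') \<subseteq> T ` VV (Suc m, n)"
    using Xbar_mono[OF VV, of "Suc m" "Suc m'" n n'] le by auto
  have s3: "T ` VV (Suc m, n) \<subseteq> Tbar T \<U> VV (m, n)" using Tbar_mem[OF VV] by blast
  have ne: "T ` VV (Suc m', n') \<noteq> {}" using Xbar_ne[OF VV] by blast
  have "E = Tbar T \<U> VV (m, n)"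
    using Umn_uniq[OF E(1) conjunct1[OF Tbar_mem[OF VV, of m n]], of "T ` VV (Suc m', n')"] s1 s2 s3 E(2) ne
    by blast
  then show "Tbar T \<U> VV (m', n') \<subseteq> Tbar T \<U> VV (m, n)" using E(2) by simp
qed

lemma Tprime_Xprime:
  assumes p: "p \<in> Xprime T \<U>" shows "Tprime T \<U> p \<in> Xprime T \<U>"
proof -
  obtain x VV where p': "p = (x, VV)" by (cases p)
  have VV: "VV \<in> Xbar T \<U>" and cl: "\<And>m n. x \<in> closure (VV (m, n))"
    using p unfolding p' Xprime_def by auto
  have "T x \<in> closure (Tbar T \<U> VV (m, n))" for m n
  proof -
    have "T ` closure (VV (Suc m, n)) \<subseteq> closure (T ` VV (Suc m, n))"
      by (rule continuous_image_closure_subset[OF contT]) simp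
    also have "\<dots> \<subseteq> closure (Tbar T \<U> VV (m, n))"
      using Tbar_mem[OF VV] by (simp add: closure_mono)
    finally show ?thesis using cl by blast
  qed
  then show ?thesis unfolding p' Tprime_def Xprime_def using Tbar_Xbar[OF VV] by simp
qed

lemma Tfwd_sub:
  assumes H: "H \<in> Tfwd T \<U> P" and U: "U \<in> \<U>" and ne: "H \<inter> T ` U \<noteq> {}"
  shows "\<exists>E\<in>P. H \<subseteq> T ` (U \<inter> E)"
proof -
  obtain A where A: "A \<in> Tfam T U P" "H \<subseteq> A"
    using pJoin_elem[OF H[unfolded Tfwd_def] U] by blast
  obtain z where z: "z \<in> H" "z \<in> T ` U" using ne by blast
  have "z \<in> T ` closure U" using z(2) closure_subset by blast
  then have "A \<noteq> UNIV - T ` closure U" using A(2) z(1) by blast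
  then have "A \<in> {T ` (U \<inter> V) | V. V \<in> P \<and> U \<inter> V \<noteq> {}}" using A(1) unfolding Tfam_def by blast
  then show ?thesis using A(2) by blast
qed

lemma KL:
  assumes V: "V \<in> Xbar T \<U>" and U: "U \<in> \<U>" and sub: "V (0, 1) \<subseteq> T ` U"
  shows "\<exists>E\<in>Umn T \<U> k n. {x \<in> closure U. T x \<in> V (k, Suc n)} \<subseteq> E"
proof (rule Umn_cover)
  have s: "V (k, Suc n) \<subseteq> T ` U" using Xbar_mono[OF V, of 0 k 1 "Suc n"] sub by auto
  show "{x \<in> closure U. T x \<in> V (k, Suc n)} \<noteq> {}" by (rule preimg_ne[OF U s Xbar_ne[OF V]])
next
  fix a b assume ab: "a \<le> k" "b \<le> n"
  have s: "V (k, Suc n) \<subseteq> T ` U" using Xbar_mono[OF V, of 0 k 1 "Suc n"] sub by auto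
  have vne: "V (k, Suc n) \<noteq> {}" using Xbar_ne[OF V] .
  show "\<exists>A\<in>Q a b. {x \<in> closure U. T x \<in> V (k, Suc n)} \<subseteq> A"
  proof (cases a)
    case 0
    obtain G where G: "G \<in> Q 0 (Suc b)" "V (k, Suc n) \<subseteq> G"
      using Umn_elem[OF Xbar_mem[OF V, of k "Suc n"], of 0 "Suc b"] ab by auto
    have "G \<in> Tfwd T \<U> (Q 0 b)" using G(1) by simp
    moreover have "G \<inter> T ` U \<noteq> {}" using G(2) s vne by blast
    ultimately obtain E where E: "E \<in> Q 0 b" "G \<subseteq> T ` (U \<inter> E)" using Tfwd_sub U by blast
    have "{x \<in> closure U. T x \<in> V (k, Suc n)} \<subseteq> E"
    proof
      fix x assume x: "x \<in> {x \<in> closure U. T x \<in> V (k, Suc n)}"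
      then obtain y where y: "y \<in> U \<inter> E" "T x = T y" using G(2) E(2) by blast
      have "y \<in> closure U" using y closure_subset by blast
      then have "x = y" using injU[OF U] x y unfolding inj_on_def by blast
      then show "x \<in> E" using y by blast
    qed
    then show ?thesis using E(1) 0 by blast
  next
    case (Suc a')
    obtain G where G: "G \<in> Q a' b" "V (k, Suc n) \<subseteq> G"
      using Umn_elem[OF Xbar_mem[OF V, of k "Suc n"], of a' b] ab Suc by auto
    obtain H where H: "H \<in> Q 0 1" "V (k, Suc n) \<subseteq> H"
      using Umn_elem[OF Xbar_mem[OF V, of k "Suc n"], of 0 1] ab by auto
    have H': "H \<in> Tfwd T \<U> \<U>" using H(1) by simp
    have "H \<inter> T ` U \<noteq> {}" using H(2) s vne by blast
    then obtain E where "H \<subseteq> T ` (U \<inter> E)" using Tfwd_sub[OF H' U] by blast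
    then have HU: "H \<subseteq> T ` U" by blast
    have Ob: "G \<inter> H \<in> pjoin (Q a' b) (Tfwd T \<U> \<U>)"
      unfolding pjoin_def using G H' H(2) vne by blast
    have "{x \<in> closure U. T x \<in> G \<inter> H} \<in> Q (Suc a') b"
    proof -
      have "G \<inter> H \<subseteq> T ` U" using HU by blast
      from Tinv_intro[OF U Ob this] show ?thesis by (simp only: Q_Suc)
    qed
    moreover have "{x \<in> closure U. T x \<in> V (k, Suc n)} \<subseteq> {x \<in> closure U. T x \<in> G \<inter> H}"
      using G H by blast
    ultimately show ?thesis using Suc by blast
  qed
qed

end


locale PIpt = PI +
  fixes U :: "'a set" and V0 :: "'a set"
  assumes U: "U \<in> \<U>" and V0: "V0 \<in> Umn T \<U> 0 1" and V0U: "V0 \<subseteq> T ` U"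
    and Bmem: "{x \<in> closure U. T x \<in> V0} \<in> Umn T \<U> 1 0"
begin

definition "B = {x \<in> closure U. T x \<in> V0}"
definition "W = {q \<in> Xprime T \<U>. snd q (1,0) = B}"
definition "N = {q \<in> Xprime T \<U>. snd q (0,1) = V0}"
definition "g = (SOME g. homeomorphism (closure U) (T ` closure U) T g)"
definition "Sk V k n = {x \<in> closure U. T x \<in> V (k, Suc n)}"
definition "VVp V = (\<lambda>(k,n). THE E. E \<in> Umn T \<U> k n \<and> Sk V k n \<subseteq> E)"
definition "Ginv q = (g (fst q), VVp (snd q))"

lemma hom: "homeomorphism (closure U) (T ` closure U) T g"
  unfolding g_def using homU[OF U] by (rule someI_ex)

lemma g_T: "x \<in> closure U \<Longrightarrow> g (T x) = x" by (rule homeomorphism_apply1[OF hom])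
lemma T_g: "z \<in> T ` closure U \<Longrightarrow> T (g z) = z" by (rule homeomorphism_apply2[OF hom])
lemma g_cont: "continuous_on (T ` closure U) g" by (rule homeomorphism_cont2[OF hom])

lemma B_sub: "B \<subseteq> U" unfolding B_def by (rule preimg_sub[OF U V0U])
lemma clB: "closure B \<subseteq> closure U" using B_sub closure_mono by blast

lemma V_sub: assumes "V \<in> Xbar T \<U>" "V (0,1) \<subseteq> T ` U" shows "V (k, Suc n) \<subseteq> T ` U"
proof -
  have "V (k, Suc n) \<subseteq> V (0, 1)" by (rule Xbar_mono[OF assms(1)]) simp_all
  then show ?thesis using assms(2) by (rule order_trans)
qed

lemma Sk_ne: assumes "V \<in> Xbar T \<U>" "V (0,1) \<subseteq> T ` U" shows "Sk V k n \<noteq> {}"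
  unfolding Sk_def by (rule preimg_ne[OF U V_sub[OF assms] Xbar_ne[OF assms(1)]])

lemma Sk_img: assumes "V \<in> Xbar T \<U>" "V (0,1) \<subseteq> T ` U" shows "T ` Sk V k n = V (k, Suc n)"
  unfolding Sk_def by (rule img_preimg[OF U V_sub[OF assms]])

lemma VVp_eq:
  assumes V: "V \<in> Xbar T \<U>" "V (0,1) \<subseteq> T ` U" and E: "E \<in> Umn T \<U> k n" "Sk V k n \<subseteq> E"
  shows "VVp V (k,n) = E"
  unfolding VVp_def prod.case
proof (rule the_equality)
  show "E \<in> Umn T \<U> k n \<and> Sk V k n \<subseteq> E" using E by simp
next
  fix E' assume "E' \<in> Umn T \<U> k n \<and> Sk V k n \<subseteq> E'"
  then show "E' = E" using Umn_uniq[OF _ E(1) _ E(2) Sk_ne[OF V]] by blast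
qed

lemma VVp_mem:
  assumes V: "V \<in> Xbar T \<U>" "V (0,1) \<subseteq> T ` U"
  shows "VVp V (k,n) \<in> Umn T \<U> k n \<and> Sk V k n \<subseteq> VVp V (k,n)"
proof -
  have "\<exists>E\<in>Umn T \<U> k n. Sk V k n \<subseteq> E" unfolding Sk_def by (rule KL[OF V(1) U V(2)])
  then obtain E where E: "E \<in> Umn T \<U> k n" "Sk V k n \<subseteq> E" by blast
  have "VVp V (k,n) = E" by (rule VVp_eq[OF V E])
  then show ?thesis using E by simp
qed

lemma VVp_Xbar:
  assumes V: "V \<in> Xbar T \<U>" "V (0,1) \<subseteq> T ` U"
  shows "VVp V \<in> Xbar T \<U>"
  unfolding Xbar_def
proof (intro CollectI conjI allI impI)
  fix m n :: nat show "VVp V (m, n) \<in> Umn T \<U> m n" using VVp_mem[OF V] by blast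
next
  fix m n m' n' :: nat assume le: "m \<le> m' \<and> n \<le> n'"
  obtain E where E: "E \<in> Umn T \<U> m n" "VVp V (m', n') \<subseteq> E"
    using Umn_mono[of m m' n n'] le VVp_mem[OF V, of m' n'] by blast
  have "V (m', Suc n') \<subseteq> V (m, Suc n)" by (rule Xbar_mono[OF V(1)]) (use le in auto)
  then have s2: "Sk V m' n' \<subseteq> Sk V m n" unfolding Sk_def by blast
  have sE: "Sk V m' n' \<subseteq> E" using E(2) VVp_mem[OF V, of m' n'] by blast
  have sV: "Sk V m' n' \<subseteq> VVp V (m, n)" using s2 VVp_mem[OF V, of m n] by blast
  have "E = VVp V (m, n)"
    using Umn_uniq[OF E(1) conjunct1[OF VVp_mem[OF V, of m n]] sE sV Sk_ne[OF V]] .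
  then show "VVp V (m', n') \<subseteq> VVp V (m, n)" using E(2) by simp
qed

lemma N_props:
  assumes q: "q \<in> N"
  shows "snd q \<in> Xbar T \<U>" "snd q (0,1) \<subseteq> T ` U" "fst q \<in> T ` closure U"
    "\<And>k n. fst q \<in> closure (snd q (k,n))"
proof -
  show X: "snd q \<in> Xbar T \<U>" using q unfolding N_def Xprime_def by auto
  show cl: "\<And>k n. fst q \<in> closure (snd q (k,n))" using q unfolding N_def Xprime_def by auto
  show s: "snd q (0,1) \<subseteq> T ` U" using q V0U unfolding N_def by auto
  have "closure (snd q (0,1)) \<subseteq> T ` closure U"
    using s closedTU[OF U] closure_subset by (metis closure_minimal image_mono order_trans)
  then show "fst q \<in> T ` closure U" using cl by blast
qed

lemma clsub: assumes "V \<in> Xbar T \<U>" "V (0,1) \<subseteq> T ` U" shows "closure (V (k, Suc n)) \<subseteq> T ` closure U"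
proof -
  have "T ` U \<subseteq> T ` closure U" by (rule image_mono[OF closure_subset])
  then have "V (k, Suc n) \<subseteq> T ` closure U" using V_sub[OF assms] by (rule order_trans[rotated])
  then show ?thesis using closedTU[OF U] by (rule closure_minimal)
qed

lemma g_img: assumes V: "V \<in> Xbar T \<U>" "V (0,1) \<subseteq> T ` U" shows "g ` V (k, Suc n) = Sk V k n"
proof
  show "g ` V (k, Suc n) \<subseteq> Sk V k n"
  proof
    fix w assume w: "w \<in> g ` V (k, Suc n)"
    then obtain z where z: "z \<in> V (k, Suc n)" "w = g z" by blast
    have "z \<in> T ` U" using z(1) V_sub[OF V, of k n] by blast
    then obtain u where u: "u \<in> U" "z = T u" by (rule imageE) simp
    have uc: "u \<in> closure U" using u(1) closure_subset by blast
    have "w = u" using z(2) u(2) g_T[OF uc] by simp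
    then show "w \<in> Sk V k n" unfolding Sk_def using uc z(1) u(2) by simp
  qed
  show "Sk V k n \<subseteq> g ` V (k, Suc n)"
  proof
    fix x assume "x \<in> Sk V k n"
    then have x: "x \<in> closure U" "T x \<in> V (k, Suc n)" unfolding Sk_def by auto
    have "x = g (T x)" using g_T[OF x(1)] by simp
    then show "x \<in> g ` V (k, Suc n)" using x(2) by (rule image_eqI)
  qed
qed

lemma Ginv_W: assumes q: "q \<in> N" shows "Ginv q \<in> W"
proof -
  note P = N_props[OF q]
  have X: "VVp (snd q) \<in> Xbar T \<U>" by (rule VVp_Xbar[OF P(1,2)])
  have cl: "g (fst q) \<in> closure (VVp (snd q) (k,n))" for k n
  proof -
    have "g ` closure (snd q (k, Suc n)) \<subseteq> closure (g ` snd q (k, Suc n))"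
      by (rule continuous_image_closure_subset[OF g_cont clsub[OF P(1,2)]])
    moreover have "g (fst q) \<in> g ` closure (snd q (k, Suc n))" using P(4)[of k "Suc n"] by (rule imageI)
    ultimately have "g (fst q) \<in> closure (g ` snd q (k, Suc n))" by (rule subsetD)
    then have "g (fst q) \<in> closure (Sk (snd q) k n)" by (simp only: g_img[OF P(1,2)])
    moreover have "closure (Sk (snd q) k n) \<subseteq> closure (VVp (snd q) (k,n))"
      using VVp_mem[OF P(1,2), of k n] by (simp add: closure_mono)
    ultimately show ?thesis by blast
  qed
  have "VVp (snd q) (1,0) = B"
  proof -
    have v0: "snd q (0,1) = V0" using q unfolding N_def by simp
    have "snd q (1, Suc 0) \<subseteq> snd q (0,1)" by (rule Xbar_mono[OF P(1)]) simp_all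
    then have "Sk (snd q) 1 0 \<subseteq> B" unfolding Sk_def B_def using v0 by blast
    then show ?thesis using VVp_eq[OF P(1,2) Bmem[folded B_def]] by simp
  qed
  moreover have "Ginv q \<in> Xprime T \<U>" unfolding Ginv_def Xprime_def using X cl by simp
  ultimately show ?thesis unfolding W_def Ginv_def by simp
qed

lemma Tprime_Ginv: assumes q: "q \<in> N" shows "Tprime T \<U> (Ginv q) = q"
proof -
  note P = N_props[OF q]
  have X: "VVp (snd q) \<in> Xbar T \<U>" by (rule VVp_Xbar[OF P(1,2)])
  have "Tbar T \<U> (VVp (snd q)) (k, n) = snd q (k, n)" for k n
  proof -
    have m1: "Tbar T \<U> (VVp (snd q)) (k, n) \<in> Umn T \<U> k n"
      and s1: "T ` VVp (snd q) (Suc k, n) \<subseteq> Tbar T \<U> (VVp (snd q)) (k, n)"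
      using Tbar_mem[OF X] by blast+
    have "T ` Sk (snd q) (Suc k) n \<subseteq> T ` VVp (snd q) (Suc k, n)"
      using VVp_mem[OF P(1,2)] by blast
    then have s2: "snd q (Suc k, Suc n) \<subseteq> Tbar T \<U> (VVp (snd q)) (k, n)"
      using Sk_img[OF P(1,2)] s1 by auto
    have s3: "snd q (Suc k, Suc n) \<subseteq> snd q (k, n)" using Xbar_mono[OF P(1)] by simp
    show ?thesis using Umn_uniq[OF m1 Xbar_mem[OF P(1)] s2 s3 Xbar_ne[OF P(1)]] .
  qed
  then have "Tbar T \<U> (VVp (snd q)) = snd q" by auto
  then show ?thesis unfolding Tprime_def Ginv_def using T_g[OF P(3)] by (simp add: prod_eq_iff)
qed

lemma Tprime_N: assumes q: "q \<in> W" shows "Tprime T \<U> q \<in> N"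
proof -
  have qx: "q \<in> Xprime T \<U>" and qB: "snd q (1,0) = B" using q unfolding W_def by auto
  have X: "snd q \<in> Xbar T \<U>" using qx unfolding Xprime_def by auto
  have "snd q (1,1) \<subseteq> snd q (1,0)" by (rule Xbar_mono[OF X]) simp_all
  then have "T ` snd q (1,1) \<subseteq> T ` B" using qB by (simp add: image_mono)
  also have "T ` B \<subseteq> V0" unfolding B_def by (rule image_Collect_subsetI) simp
  finally have s: "T ` snd q (Suc 0, 1) \<subseteq> V0" by simp
  have eq: "Tbar T \<U> (snd q) (0,1) = V0" by (rule Tbar_char[OF X V0 s])
  have "Tprime T \<U> q \<in> Xprime T \<U>" by (rule Tprime_Xprime[OF qx])
  moreover have "snd (Tprime T \<U> q) (0,1) = V0" unfolding Tprime_def using eq by simp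
  ultimately show ?thesis unfolding N_def by simp
qed

lemma Ginv_Tprime: assumes q: "q \<in> W" shows "Ginv (Tprime T \<U> q) = q"
proof -
  have qx: "q \<in> Xprime T \<U>" and qB: "snd q (1,0) = B" using q unfolding W_def by auto
  have X: "snd q \<in> Xbar T \<U>" and cl: "\<And>k n. fst q \<in> closure (snd q (k,n))"
    using qx unfolding Xprime_def by auto
  have "fst q \<in> closure B" using cl[of 1 0] qB by simp
  then have yU: "fst q \<in> closure U" using clB by (rule subsetD[rotated])
  have TN: "Tprime T \<U> q \<in> N" by (rule Tprime_N[OF q])
  note P = N_props[OF TN]
  let ?V = "Tbar T \<U> (snd q)"
  have sq: "snd (Tprime T \<U> q) = ?V" by (simp add: Tprime_def)
  have V: "?V \<in> Xbar T \<U>" "?V (0,1) \<subseteq> T ` U" using P(1,2) unfolding sq by simp_all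
  have "VVp ?V (k,n) = snd q (k,n)" for k n
  proof -
    have "\<exists>E\<in>Umn T \<U> k n. Sk ?V k n \<subseteq> E" unfolding Sk_def by (rule KL[OF V(1) U V(2)])
    then obtain E where E: "E \<in> Umn T \<U> k n" "Sk ?V k n \<subseteq> E" by blast
    have a: "snd q (Suc k, Suc n) \<subseteq> Sk ?V k n"
    proof
      fix x assume x: "x \<in> snd q (Suc k, Suc n)"
      have "snd q (Suc k, Suc n) \<subseteq> snd q (1,0)" by (rule Xbar_mono[OF X]) simp_all
      then have "x \<in> B" using x qB by blast
      then have xc: "x \<in> closure U" using B_sub closure_subset by blast
      have "T ` snd q (Suc k, Suc n) \<subseteq> ?V (k, Suc n)" using Tbar_mem[OF X, of k "Suc n"] by blast
      then have "T x \<in> ?V (k, Suc n)" using x by blast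
      then show "x \<in> Sk ?V k n" unfolding Sk_def using xc by simp
    qed
    have b: "snd q (Suc k, Suc n) \<subseteq> snd q (k, n)" by (rule Xbar_mono[OF X]) simp_all
    have "E = snd q (k,n)"
      using Umn_uniq[OF E(1) Xbar_mem[OF X] order_trans[OF a E(2)] b Xbar_ne[OF X]] .
    then show ?thesis using VVp_eq[OF V E] by simp
  qed
  then have "VVp ?V = snd q" by auto
  then show ?thesis unfolding Ginv_def Tprime_def using g_T[OF yU] by (simp add: prod_eq_iff)
qed

lemma img_W: "Tprime T \<U> ` W = N"
proof
  show "Tprime T \<U> ` W \<subseteq> N" using Tprime_N by blast
  show "N \<subseteq> Tprime T \<U> ` W"
  proof
    fix q assume "q \<in> N"
    then show "q \<in> Tprime T \<U> ` W" using Ginv_W Tprime_Ginv by (metis image_eqI)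
  qed
qed

end


context PI begin

lemma top_Xbar: "topspace (Xbar_top T \<U>) = Xbar T \<U>"
  unfolding Xbar_top_def by simp

lemma top_Xp: "topspace (Xprime_top T \<U>) = Xprime T \<U>"
  unfolding Xprime_top_def using top_Xbar by (auto simp: Xprime_def)

lemma proj_cont: "continuous_map (Xprime_top T \<U>) (discrete_topology UNIV) (\<lambda>q. snd q i)"
proof -
  have c1: "continuous_map (Xprime_top T \<U>) (Xbar_top T \<U>) snd"
    unfolding Xprime_top_def by (rule continuous_map_from_subtopology[OF continuous_map_snd])
  have c2: "continuous_map (Xbar_top T \<U>) (discrete_topology UNIV) (\<lambda>f. f i)"
    unfolding Xbar_top_def by (rule continuous_map_from_subtopology[OF continuous_map_product_projection]) simp
  from continuous_map_compose[OF c1 c2] show ?thesis by (simp add: o_def)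
qed

lemma fst_cont: "continuous_map (Xprime_top T \<U>) euclidean fst"
  unfolding Xprime_top_def by (rule continuous_map_from_subtopology[OF continuous_map_fst])

lemma proj_fun_cont: "continuous_map (Xprime_top T \<U>) (discrete_topology UNIV) (\<lambda>q. \<phi> (snd q i))"
proof -
  have "continuous_map (discrete_topology UNIV) (discrete_topology UNIV) \<phi>" by simp
  from continuous_map_compose[OF proj_cont this] show ?thesis by (simp add: o_def)
qed

lemma into_Xbar:
  assumes "\<And>i. continuous_map Z (discrete_topology UNIV) (\<lambda>q. F q i)"
    and "\<And>q. q \<in> topspace Z \<Longrightarrow> F q \<in> Xbar T \<U>"
  shows "continuous_map Z (Xbar_top T \<U>) F"
  unfolding Xbar_top_def
  by (rule continuous_map_into_subtopology) (use assms in \<open>auto simp: continuous_map_componentwise_UNIV\<close>)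

lemma Tprime_cont: "continuous_map (Xprime_top T \<U>) (Xprime_top T \<U>) (Tprime T \<U>)"
proof -
  have eq: "Tprime T \<U> = (\<lambda>q. (T (fst q), Tbar T \<U> (snd q)))" by (rule ext) (simp add: Tprime_def)
  have c1: "continuous_map (Xprime_top T \<U>) euclidean (\<lambda>q. T (fst q))"
  proof -
    have "continuous_map euclidean euclidean T" using contT by simp
    from continuous_map_compose[OF fst_cont this] show ?thesis by (simp add: o_def)
  qed
  have c2: "continuous_map (Xprime_top T \<U>) (Xbar_top T \<U>) (\<lambda>q. Tbar T \<U> (snd q))"
  proof (rule into_Xbar)
    fix i :: "nat \<times> nat"
    obtain k n where i: "i = (k,n)" by (cases i)
    have "(\<lambda>q. Tbar T \<U> (snd q) i) = (\<lambda>q. (\<lambda>S. THE V. V \<in> Umn T \<U> k n \<and> T ` S \<subseteq> V) (snd q (Suc k, n)))"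
      by (rule ext) (simp add: Tbar_def i)
    show "continuous_map (Xprime_top T \<U>) (discrete_topology UNIV) (\<lambda>q. Tbar T \<U> (snd q) i)"
      by (rule continuous_map_eq[OF proj_fun_cont[of "\<lambda>S. THE V. V \<in> Umn T \<U> k n \<and> T ` S \<subseteq> V" "(Suc k, n)"]]) (simp add: Tbar_def i)
  next
    fix q assume "q \<in> topspace (Xprime_top T \<U>)"
    then have "snd q \<in> Xbar T \<U>" by (auto simp: top_Xp Xprime_def)
    then show "Tbar T \<U> (snd q) \<in> Xbar T \<U>" by (rule Tbar_Xbar)
  qed
  have "continuous_map (Xprime_top T \<U>) (prod_topology euclidean (Xbar_top T \<U>)) (Tprime T \<U>)"
    unfolding eq continuous_map_paired using c1 c2 by simp
  then show ?thesis unfolding Xprime_top_def[of T \<U>, symmetric] 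
    by (subst (2) Xprime_top_def, rule continuous_map_into_subtopology)
       (auto simp: top_Xp Tprime_Xprime)
qed

lemma struct10:
  assumes UU: "UU \<in> Xbar T \<U>"
  shows "\<exists>U\<in>\<U>. \<exists>V0. V0 \<in> Umn T \<U> 0 1 \<and> V0 \<subseteq> T ` U \<and> UU (1,0) = {x \<in> closure U. T x \<in> V0}"
proof -
  have m: "UU (1,0) \<in> Umn T \<U> 1 0" by (rule Xbar_mem[OF UU])
  have ne: "UU (1,0) \<noteq> {}" by (rule Xbar_ne[OF UU])
  obtain U where U: "U \<in> Q 0 0" "UU (1,0) \<subseteq> U" using Umn_elem[OF m, of 0 0] by auto
  have U': "U \<in> \<U>" using U(1) by simp
  obtain A where A: "A \<in> Q 1 0" "UU (1,0) \<subseteq> A" using Umn_elem[OF m, of 1 0] by auto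
  have "A \<in> Tinv T \<U> \<U>" using A(1) by simp
  then obtain U1 Ob where a: "U1 \<in> \<U>" "Ob \<in> pjoin \<U> (Tfwd T \<U> \<U>)" "Ob \<subseteq> T ` U1"
    "A = {x \<in> closure U1. T x \<in> Ob}" by (rule Tinv_elem)
  have AU1: "A \<subseteq> U1" unfolding a(4) by (rule preimg_sub[OF a(1,3)])
  have "U \<inter> U1 \<noteq> {}" using ne U(2) A(2) AU1 by blast
  then have UU1: "U1 = U" using U_disj[OF U' a(1)] by simp
  have "\<exists>E\<in>Umn T \<U> 1 0. A \<subseteq> E"
  proof (rule Umn_cover)
    show "A \<noteq> {}" using ne A(2) by blast
  next
    fix a b :: nat assume ab: "a \<le> 1" "b \<le> 0"
    show "\<exists>A'\<in>Q a b. A \<subseteq> A'"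
    proof (cases a)
      case 0 then show ?thesis using ab U(1) AU1 UU1 by auto
    next
      case (Suc a') then have "a = 1" using ab by simp
      then show ?thesis using ab A(1) by auto
    qed
  qed
  then obtain E where E: "E \<in> Umn T \<U> 1 0" "A \<subseteq> E" by blast
  have "E = UU (1,0)" using Umn_uniq[OF E(1) m order_trans[OF A(2) E(2)] order_refl ne] .
  then have eqA: "UU (1,0) = A" using A(2) E(2) by blast
  obtain G H where gh: "G \<in> \<U>" "H \<in> Tfwd T \<U> \<U>" "Ob = G \<inter> H" "G \<inter> H \<noteq> {}"
    using a(2) unfolding pjoin_def by blast
  have ObU: "\<exists>E\<in>Umn T \<U> 0 1. Ob \<subseteq> E"
  proof (rule Umn_cover)
    show "Ob \<noteq> {}" using gh by simp
  next
    fix a b :: nat assume ab: "a \<le> 0" "b \<le> 1"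
    show "\<exists>A'\<in>Q a b. Ob \<subseteq> A'"
    proof (cases b)
      case 0 then show ?thesis using ab gh by auto
    next
      case (Suc b') then have "b = 1" using ab by simp
      then show ?thesis using ab gh by auto
    qed
  qed
  then obtain E' where E': "E' \<in> Umn T \<U> 0 1" "Ob \<subseteq> E'" by blast
  obtain A0 where A0: "A0 \<in> Q 0 0" "E' \<subseteq> A0" using Umn_elem[OF E'(1), of 0 0] by auto
  obtain A1 where A1: "A1 \<in> Q 0 1" "E' \<subseteq> A1" using Umn_elem[OF E'(1), of 0 1] by auto
  have onn: "Ob \<noteq> {}" using gh by simp
  have "A0 = G" using dfam_uniq[OF dfamU, of A0 G Ob] A0 E'(2) gh by auto
  moreover have "A1 = H" using dfam_uniq[OF TU_dfam, of A1 H Ob] A1 E'(2) gh by auto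
  ultimately have "E' \<subseteq> Ob" using A0 A1 gh by blast
  then have "Ob \<in> Umn T \<U> 0 1" using E' by (metis subset_antisym)
  then show ?thesis using U' a(3,4) eqA UU1 by blast
qed

end

context PIpt begin

lemma W_open: "openin (Xprime_top T \<U>) W"
proof -
  have "openin (Xprime_top T \<U>) {q \<in> topspace (Xprime_top T \<U>). snd q (1,0) \<in> {B}}"
    by (rule openin_continuous_map_preimage[OF proj_cont]) simp
  moreover have "{q \<in> topspace (Xprime_top T \<U>). snd q (1,0) \<in> {B}} = W"
    by (auto simp: top_Xp W_def)
  ultimately show ?thesis by simp
qed

lemma N_open: "openin (Xprime_top T \<U>) N"
proof -
  have "openin (Xprime_top T \<U>) {q \<in> topspace (Xprime_top T \<U>). snd q (0,1) \<in> {V0}}"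
    by (rule openin_continuous_map_preimage[OF proj_cont]) simp
  moreover have "{q \<in> topspace (Xprime_top T \<U>). snd q (0,1) \<in> {V0}} = N"
    by (auto simp: top_Xp N_def)
  ultimately show ?thesis by simp
qed

lemma WX: "W \<subseteq> Xprime T \<U>" unfolding W_def by auto
lemma NX: "N \<subseteq> Xprime T \<U>" unfolding N_def by auto

lemma topW: "topspace (subtopology (Xprime_top T \<U>) W) = W"
  using WX by (simp add: top_Xp Int_absorb1)
lemma topN: "topspace (subtopology (Xprime_top T \<U>) N) = N"
  using NX by (simp add: top_Xp Int_absorb1)

lemma Ginv_cont: "continuous_map (subtopology (Xprime_top T \<U>) N) (Xprime_top T \<U>) Ginv"
proof -
  let ?Z = "subtopology (Xprime_top T \<U>) N"
  have eq: "Ginv = (\<lambda>q. (g (fst q), VVp (snd q)))" by (rule ext) (simp add: Ginv_def)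
  have c1: "continuous_map ?Z euclidean (\<lambda>q. g (fst q))"
  proof -
    have f: "continuous_map ?Z (top_of_set (T ` closure U)) fst"
      by (rule continuous_map_into_subtopology[OF continuous_map_from_subtopology[OF fst_cont]])
         (use N_props(3) in \<open>auto simp: topN\<close>)
    have "continuous_map (top_of_set (T ` closure U)) euclidean g" using g_cont by simp
    from continuous_map_compose[OF f this] show ?thesis by (simp add: o_def)
  qed
  have c2: "continuous_map ?Z (Xbar_top T \<U>) (\<lambda>q. VVp (snd q))"
  proof (rule into_Xbar)
    fix i :: "nat \<times> nat"
    obtain k n where i: "i = (k,n)" by (cases i)
    have "(\<lambda>q. VVp (snd q) i) = (\<lambda>q. (\<lambda>S. THE E. E \<in> Umn T \<U> k n \<and> {x \<in> closure U. T x \<in> S} \<subseteq> E) (snd q (k, Suc n)))"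
      by (rule ext) (simp add: VVp_def Sk_def i)
    show "continuous_map ?Z (discrete_topology UNIV) (\<lambda>q. VVp (snd q) i)"
      by (rule continuous_map_eq[OF continuous_map_from_subtopology[OF proj_fun_cont[of "\<lambda>S. THE E. E \<in> Umn T \<U> k n \<and> {x \<in> closure U. T x \<in> S} \<subseteq> E" "(k, Suc n)"]]]) (simp add: VVp_def Sk_def i)
  next
    fix q assume "q \<in> topspace ?Z"
    then have "q \<in> N" by (simp add: topN)
    then show "VVp (snd q) \<in> Xbar T \<U>" using VVp_Xbar N_props by blast
  qed
  have "continuous_map ?Z (prod_topology euclidean (Xbar_top T \<U>)) Ginv"
    unfolding eq continuous_map_paired using c1 c2 by simp
  then show ?thesis
    by (subst (2) Xprime_top_def, rule continuous_map_into_subtopology)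
       (use Ginv_W WX in \<open>auto simp: topN\<close>)
qed

lemma homeo: "homeomorphic_map (subtopology (Xprime_top T \<U>) W) (subtopology (Xprime_top T \<U>) N) (Tprime T \<U>)"
  unfolding homeomorphic_map_maps homeomorphic_maps_def
proof (intro exI conjI ballI)
  show "continuous_map (subtopology (Xprime_top T \<U>) W) (subtopology (Xprime_top T \<U>) N) (Tprime T \<U>)"
    by (rule continuous_map_into_subtopology[OF continuous_map_from_subtopology[OF Tprime_cont]])
       (use Tprime_N in \<open>auto simp: topW\<close>)
  show "continuous_map (subtopology (Xprime_top T \<U>) N) (subtopology (Xprime_top T \<U>) W) Ginv"
    by (rule continuous_map_into_subtopology[OF Ginv_cont]) (use Ginv_W in \<open>auto simp: topN\<close>)
  fix x assume "x \<in> topspace (subtopology (Xprime_top T \<U>) W)"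
  then show "Ginv (Tprime T \<U> x) = x" using Ginv_Tprime by (simp add: topW)
next
  fix y assume "y \<in> topspace (subtopology (Xprime_top T \<U>) N)"
  then show "Tprime T \<U> (Ginv y) = y" using Tprime_Ginv by (simp add: topN)
qed

end

context PI begin

lemma main: "local_homeomorphism (Xprime_top T \<U>) (Xprime_top T \<U>) (Tprime T \<U>)"
  unfolding local_homeomorphism_def
proof (intro conjI ballI)
  show "Tprime T \<U> ` topspace (Xprime_top T \<U>) \<subseteq> topspace (Xprime_top T \<U>)"
    using Tprime_Xprime by (auto simp: top_Xp)
next
  fix p assume "p \<in> topspace (Xprime_top T \<U>)"
  then have p: "p \<in> Xprime T \<U>" by (simp add: top_Xp)
  then have X: "snd p \<in> Xbar T \<U>" unfolding Xprime_def by auto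
  obtain U V0 where U: "U \<in> \<U>" and V0: "V0 \<in> Umn T \<U> 0 1" "V0 \<subseteq> T ` U"
    and eq: "snd p (1,0) = {x \<in> closure U. T x \<in> V0}"
    using struct10[OF X] by blast
  have Bm: "{x \<in> closure U. T x \<in> V0} \<in> Umn T \<U> 1 0" using Xbar_mem[OF X, of 1 0] eq by simp
  interpret P: PIpt T \<U> U V0
    by unfold_locales (use cpt pi U V0 Bm in auto)
  have "p \<in> P.W" unfolding P.W_def P.B_def using p eq by simp
  then show "\<exists>W. openin (Xprime_top T \<U>) W \<and> p \<in> W \<and> openin (Xprime_top T \<U>) (Tprime T \<U> ` W) \<and>
      homeomorphic_map (subtopology (Xprime_top T \<U>) W) (subtopology (Xprime_top T \<U>) (Tprime T \<U> ` W)) (Tprime T \<U>)"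
    using P.W_open P.N_open P.homeo P.img_W by metis
qed

end

theorem proposition5p5:
  fixes T :: "'a::t2_space \<Rightarrow> 'a" and \<U> :: "'a set set"
  assumes "compact (UNIV :: 'a set)"
    and "piecewise_invertible T \<U>"
  shows "local_homeomorphism (Xprime_top T \<U>) (Xprime_top T \<U>) (Tprime T \<U>)"
proof -
  interpret PI T \<U> using assms by unfold_locales
  show ?thesis by (rule main)
qed


end
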